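(* The set of all sampled networks with one hidden layer of arbitrary width and activation function $\tanh$ is dense in $C(\mathcal{X},\mathbb{R}^{N_2})$ with respect to the uniform norm on $\mathcal{X}$.
   Context: Input space: Euclidean norm and inner product on $\mathbb{R}^D$. For $A\subseteq\mathbb{R}^D$ let $d(z,A)=\inf_{a\in A}\|z-a\|$, $\mathrm{Med}(A)=\{z:\exists p\neq q\in A,\ \|p-z\|=\|q-z\|=d(z,A)\}$, reach $\tau_A=\inf_{a\in A}d(a,\mathrm{Med}(A))$. Let $\mathcal{X}'\subset\mathbb{R}^D$ be nonempty compact with $\tau_{\mathcal{X}'}>0$, fix $0<\epsilon_I<\min\{\tau_{\mathcal{X}'},1\}$, and $\mathcal{X}=\{x:d(x,\mathcal{X}')\le\epsilon_I\}$. With $\psi=\tanh$, $s_2=\frac{\ln3}{2}$, $s_1=2s_2$, a sampled tanh network with one hidden layer of $N_1$ neurons is $\Psi(x)=\sum_{i=1}^{N_1}w_{2,i}\psi(\langle w_{1,i},x\rangle-b_{1,i})-b_2$ where for each $i$ there are distinct $x^{(1)}_{0,i},x^{(2)}_{0,i}\in\mathcal{X}$ with $w_{1,i}=s_1\frac{x^{(2)}_{0,i}-x^{(1)}_{0,i}}{\|x^{(2)}_{0,i}-x^{(1)}_{0,i}\|^2}$ and $b_{1,i}=\langle w_{1,i},x^{(1)}_{0,i}\rangle+s_2$; the output parameters $w_{2,i},b_2\in\mathbb{R}^{N_2}$ are unrestricted. *)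

theory Defs
  imports "HOL-Analysis.Analysis"
begin

text \<open>Distance from a point to a set, with the convention that the infimum over the
  empty set is +infinity (needed so that sets with empty medial axis have infinite reach).\<close>
definition edist_set :: "'a::metric_space \<Rightarrow> 'a set \<Rightarrow> ereal" where
  "edist_set z A = (INF a\<in>A. ereal (dist z a))"

definition medial_axis :: "'a::metric_space set \<Rightarrow> 'a set" where
  "medial_axis A = {z. \<exists>p\<in>A. \<exists>q\<in>A. p \<noteq> q \<and>
      ereal (dist p z) = edist_set z A \<and> ereal (dist q z) = edist_set z A}"

definition reach :: "'a::metric_space set \<Rightarrow> ereal" where
  "reach A = (INF a\<in>A. edist_set a (medial_axis A))"

definition s2 :: real where "s2 = ln 3 / 2"
definition s1 :: real where "s1 = 2 * s2"

definition sampled_weight :: "'a::euclidean_space \<Rightarrow> 'a \<Rightarrow> 'a" where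
  "sampled_weight x1 x2 = (s1 / (norm (x2 - x1))^2) *\<^sub>R (x2 - x1)"

definition sampled_bias :: "'a::euclidean_space \<Rightarrow> 'a \<Rightarrow> real" where
  "sampled_bias x1 x2 = inner (sampled_weight x1 x2) x1 + s2"

definition sampled_tanh_net :: "'a::euclidean_space set \<Rightarrow> ('a \<Rightarrow> 'b::euclidean_space) \<Rightarrow> bool" where
  "sampled_tanh_net X Psi \<longleftrightarrow>
     (\<exists>(N1::nat) (x1::nat \<Rightarrow> 'a) (x2::nat \<Rightarrow> 'a) (w2::nat \<Rightarrow> 'b) (b2::'b).
        (\<forall>i<N1. x1 i \<in> X \<and> x2 i \<in> X \<and> x1 i \<noteq> x2 i) \<and>
        Psi = (\<lambda>x. (\<Sum>i<N1. tanh (inner (sampled_weight (x1 i) (x2 i)) x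
                                   - sampled_bias (x1 i) (x2 i)) *\<^sub>R w2 i) - b2))"

end

theory Submission
  imports Defs "HOL-Analysis.Analysis"
begin


lemma sum_lessThan_add_split:
  "(\<Sum>i<m+n. f i) = (\<Sum>i<m. f i) + (\<Sum>i<n. f (m+i))" for f :: "nat \<Rightarrow> 'b::comm_monoid_add"
  by (induction n) (auto simp: add.assoc)

lemma net_intro:
  fixes N :: nat and x1 x2 :: "nat \<Rightarrow> 'a::euclidean_space" and w :: "nat \<Rightarrow> 'b::euclidean_space"
  assumes "\<forall>i<N. x1 i \<in> X \<and> x2 i \<in> X \<and> x1 i \<noteq> x2 i"
    and "Psi = (\<lambda>x. (\<Sum>i<N. tanh (inner (sampled_weight (x1 i) (x2 i)) x
                                   - sampled_bias (x1 i) (x2 i)) *\<^sub>R w i) - b)"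
  shows "sampled_tanh_net X Psi"
  unfolding sampled_tanh_net_def
  by (rule exI[of _ N], rule exI[of _ x1], rule exI[of _ x2], rule exI[of _ w], rule exI[of _ b]) (rule conjI[OF assms])

lemma net_add:
  fixes f g :: "'a::euclidean_space \<Rightarrow> 'b::euclidean_space"
  assumes "sampled_tanh_net X f" "sampled_tanh_net X g"
  shows "sampled_tanh_net X (\<lambda>x. f x + g x)"
proof -
  obtain N and x1 x2 :: "nat \<Rightarrow> 'a" and w :: "nat \<Rightarrow> 'b" and b where A: "\<forall>i<N. x1 i \<in> X \<and> x2 i \<in> X \<and> x1 i \<noteq> x2 i"
    and f: "f = (\<lambda>x. (\<Sum>i<N. tanh (inner (sampled_weight (x1 i) (x2 i)) x
                                   - sampled_bias (x1 i) (x2 i)) *\<^sub>R w i) - b)"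
    using assms(1) unfolding sampled_tanh_net_def by blast
  obtain N' and y1 y2 :: "nat \<Rightarrow> 'a" and w' :: "nat \<Rightarrow> 'b" and b' where B: "\<forall>i<N'. y1 i \<in> X \<and> y2 i \<in> X \<and> y1 i \<noteq> y2 i"
    and g: "g = (\<lambda>x. (\<Sum>i<N'. tanh (inner (sampled_weight (y1 i) (y2 i)) x
                                   - sampled_bias (y1 i) (y2 i)) *\<^sub>R w' i) - b')"
    using assms(2) unfolding sampled_tanh_net_def by blast
  define z1 where "z1 i = (if i < N then x1 i else y1 (i - N))" for i
  define z2 where "z2 i = (if i < N then x2 i else y2 (i - N))" for i
  define v where "v i = (if i < N then w i else w' (i - N))" for i
  have C: "\<forall>i<N+N'. z1 i \<in> X \<and> z2 i \<in> X \<and> z1 i \<noteq> z2 i"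
    using A B by (auto simp: z1_def z2_def)
  have S1: "(\<Sum>i<N. tanh (inner (sampled_weight (z1 i) (z2 i)) x - sampled_bias (z1 i) (z2 i)) *\<^sub>R v i)
     = (\<Sum>i<N. tanh (inner (sampled_weight (x1 i) (x2 i)) x - sampled_bias (x1 i) (x2 i)) *\<^sub>R w i)" for x
    by (rule sum.cong) (simp_all add: z1_def z2_def v_def)
  have S2: "(\<Sum>i<N'. tanh (inner (sampled_weight (z1 (N+i)) (z2 (N+i))) x - sampled_bias (z1 (N+i)) (z2 (N+i))) *\<^sub>R v (N+i))
     = (\<Sum>i<N'. tanh (inner (sampled_weight (y1 i) (y2 i)) x - sampled_bias (y1 i) (y2 i)) *\<^sub>R w' i)" for x
    by (simp add: z1_def z2_def v_def)
  have D: "(\<lambda>x. f x + g x) = (\<lambda>x. (\<Sum>i<N+N'. tanh (inner (sampled_weight (z1 i) (z2 i)) x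
                                   - sampled_bias (z1 i) (z2 i)) *\<^sub>R v i) - (b + b'))"
    unfolding f g sum_lessThan_add_split S1 S2 by (simp add: algebra_simps)
  show ?thesis by (rule net_intro[OF C D])
qed

lemma net_scale:
  fixes f :: "'a::euclidean_space \<Rightarrow> 'b::euclidean_space"
  assumes "sampled_tanh_net X f"
  shows "sampled_tanh_net X (\<lambda>x. a *\<^sub>R f x)"
proof -
  obtain N and x1 x2 :: "nat \<Rightarrow> 'a" and w :: "nat \<Rightarrow> 'b" and b where A: "\<forall>i<N. x1 i \<in> X \<and> x2 i \<in> X \<and> x1 i \<noteq> x2 i"
    and f: "f = (\<lambda>x. (\<Sum>i<N. tanh (inner (sampled_weight (x1 i) (x2 i)) x
                                   - sampled_bias (x1 i) (x2 i)) *\<^sub>R w i) - b)"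
    using assms(1) unfolding sampled_tanh_net_def by blast
  have D: "(\<lambda>x. a *\<^sub>R f x) = (\<lambda>x. (\<Sum>i<N. tanh (inner (sampled_weight (x1 i) (x2 i)) x
                                   - sampled_bias (x1 i) (x2 i)) *\<^sub>R (a *\<^sub>R w i)) - a *\<^sub>R b)"
    unfolding f by (simp add: scaleR_diff_right scaleR_sum_right algebra_simps)
  show ?thesis by (rule net_intro[OF A D])
qed

lemma net_const: "sampled_tanh_net (X::'a::euclidean_space set) (\<lambda>x. c::'b::euclidean_space)"
  unfolding sampled_tanh_net_def
  by (rule exI[of _ 0], rule exI[of _ "\<lambda>_. 0"], rule exI[of _ "\<lambda>_. 0"], rule exI[of _ "\<lambda>_. 0"],
      rule exI[of _ "-c"]) simp

lemma net_neuron: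
  assumes "x1 \<in> X" "x2 \<in> X" "x1 \<noteq> x2"
  shows "sampled_tanh_net X (\<lambda>x. tanh (inner (sampled_weight x1 x2) x - sampled_bias x1 x2) *\<^sub>R v)"
  unfolding sampled_tanh_net_def
  by (rule exI[of _ "Suc 0"], rule exI[of _ "\<lambda>_. x1"], rule exI[of _ "\<lambda>_. x2"], rule exI[of _ "\<lambda>_. v"],
      rule exI[of _ "0"]) (simp add: assms)

lemma net_real_vec:
  assumes "sampled_tanh_net X (f :: 'a::euclidean_space \<Rightarrow> real)"
  shows "sampled_tanh_net X (\<lambda>x. f x *\<^sub>R (v::'b::euclidean_space))"
proof -
  obtain N and x1 x2 :: "nat \<Rightarrow> 'a" and w :: "nat \<Rightarrow> real" and b where A: "\<forall>i<N. x1 i \<in> X \<and> x2 i \<in> X \<and> x1 i \<noteq> x2 i"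
    and f: "f = (\<lambda>x. (\<Sum>i<N. tanh (inner (sampled_weight (x1 i) (x2 i)) x
                                   - sampled_bias (x1 i) (x2 i)) *\<^sub>R w i) - b)"
    using assms(1) unfolding sampled_tanh_net_def by blast
  have D: "(\<lambda>x. f x *\<^sub>R v) = (\<lambda>x. (\<Sum>i<N. tanh (inner (sampled_weight (x1 i) (x2 i)) x
                                   - sampled_bias (x1 i) (x2 i)) *\<^sub>R (w i *\<^sub>R v)) - b *\<^sub>R v)"
    unfolding f by (simp add: scaleR_diff_left scaleR_sum_left)
  show ?thesis by (rule net_intro[OF A D])
qed

lemma net_sum:
  assumes "finite I" "\<And>i. i \<in> I \<Longrightarrow> sampled_tanh_net X (f i)"
  shows "sampled_tanh_net X (\<lambda>x. \<Sum>i\<in>I. f i x)"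
  using assms
proof (induction I rule: finite_induct)
  case empty
  then show ?case using net_const[of X 0] by simp
next
  case (insert a F)
  then show ?case using net_add[of X "f a" "\<lambda>x. \<Sum>i\<in>F. f i x"] by simp
qed



lemma s1_eq: "s1 = 2 * s2" by (simp add: s1_def)
lemma s2_pos: "s2 > 0" unfolding s2_def by simp
lemma s1_pos: "s1 > 0" using s2_pos s1_eq by simp

lemma tanh_big: "\<eta> > 0 \<Longrightarrow> \<exists>M>0. \<forall>z\<ge>M. tanh z \<ge> 1 - (\<eta>::real)"
proof -
  assume "\<eta> > 0"
  then have "eventually (\<lambda>z. tanh z > 1 - \<eta>) at_top"
    using tanh_real_at_top by (intro order_tendstoD(1)) auto
  then obtain N where N: "\<forall>z\<ge>N. tanh z > 1 - \<eta>" unfolding eventually_at_top_linorder by blast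
  have "\<forall>z\<ge>max N 1. tanh z \<ge> 1 - \<eta>" using N by (simp add: less_imp_le)
  moreover have "max N 1 > 0" by simp
  ultimately show ?thesis by blast
qed

lemma abs_inner_unit: "norm (u::'a::real_inner) = 1 \<Longrightarrow> \<bar>u \<bullet> z\<bar> \<le> norm z"
  using Cauchy_Schwarz_ineq2[of u z] by simp

locale nbhd =
  fixes X' :: "'a::euclidean_space set" and eps :: real
  assumes cpt: "compact X'" and ne: "X' \<noteq> {}" and eps_pos: "0 < eps"
begin

definition XX where "XX = {x. infdist x X' \<le> eps}"

lemma near: "x \<in> XX \<Longrightarrow> \<exists>c\<in>X'. dist x c \<le> eps"
proof -
  assume "x \<in> XX"
  obtain c where "c \<in> X'" "infdist x X' = dist x c"
    using infdist_attains_inf[OF compact_imp_closed[OF cpt] ne] by blast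
  then show ?thesis using \<open>x \<in> XX\<close> unfolding XX_def by auto
qed

lemma inXX: "c \<in> X' \<Longrightarrow> dist y c \<le> eps \<Longrightarrow> y \<in> XX"
  unfolding XX_def using infdist_le[of c X' y] by auto

lemma inXX_line: "c \<in> X' \<Longrightarrow> norm u = 1 \<Longrightarrow> \<bar>s\<bar> \<le> eps \<Longrightarrow> c + s *\<^sub>R u \<in> XX"
  by (rule inXX[of c]) (auto simp: dist_norm)

lemma XX_compact: "compact XX"
proof -
  have cl: "closed XX" unfolding XX_def
    by (rule closed_Collect_le) (auto intro: continuous_intros)
  obtain B where B: "\<forall>c\<in>X'. norm c \<le> B"
    using compact_imp_bounded[OF cpt] unfolding bounded_iff by blast
  have "XX \<subseteq> cball 0 (B + eps)"
  proof
    fix x assume "x \<in> XX"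
    then obtain c where "c \<in> X'" "dist x c \<le> eps" using near by blast
    then have "norm x \<le> norm c + eps" using norm_triangle_ineq2[of x c] by (simp add: dist_norm)
    then show "x \<in> cball 0 (B + eps)" using B \<open>c \<in> X'\<close> by force
  qed
  then have "bounded XX" using bounded_cball bounded_subset by blast
  then show ?thesis using cl compact_eq_bounded_closed by blast
qed

lemma XX_bound: "\<exists>B. \<forall>x\<in>XX. norm x \<le> B"
  using compact_imp_bounded[OF XX_compact] unfolding bounded_iff by blast

lemma proj_near: "norm u = 1 \<Longrightarrow> x \<in> XX \<Longrightarrow> \<exists>c\<in>X'. \<bar>u \<bullet> x - u \<bullet> c\<bar> \<le> eps"
proof -
  assume u: "norm u = 1" and "x \<in> XX"
  then obtain c where c: "c \<in> X'" "dist x c \<le> eps" using near by blast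
  have "\<bar>u \<bullet> x - u \<bullet> c\<bar> = \<bar>u \<bullet> (x - c)\<bar>" by (simp add: inner_diff_right)
  also have "\<dots> \<le> norm (x - c)" by (rule abs_inner_unit[OF u])
  finally have "\<bar>u \<bullet> x - u \<bullet> c\<bar> \<le> eps" using c(2) by (simp add: dist_norm)
  then show ?thesis using c(1) by blast
qed

lemma dir_neuron:
  assumes u: "norm u = 1" and y: "y \<in> XX" and y2: "y + r *\<^sub>R u \<in> XX" and r: "r > 0"
  shows "sampled_tanh_net XX (\<lambda>x. a * tanh (s1 / r * (u \<bullet> x - u \<bullet> y) - s2) + b)"
proof -
  have ne: "y \<noteq> y + r *\<^sub>R u" using u r by auto
  have w: "sampled_weight y (y + r *\<^sub>R u) = (s1 / r) *\<^sub>R u"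
    using r u by (simp add: sampled_weight_def power2_eq_square)
  have bb: "sampled_bias y (y + r *\<^sub>R u) = s1 / r * (u \<bullet> y) + s2"
    unfolding sampled_bias_def w by simp
  have eq: "(\<lambda>x. a * tanh (s1 / r * (u \<bullet> x - u \<bullet> y) - s2) + b) =
     (\<lambda>x. tanh (inner (sampled_weight y (y + r *\<^sub>R u)) x - sampled_bias y (y + r *\<^sub>R u)) *\<^sub>R a + b)"
    unfolding w bb by (simp add: algebra_simps)
  show ?thesis unfolding eq
    by (rule net_add[OF net_neuron[OF y y2 ne] net_const])
qed

lemma sharp_neuron:
  assumes u: "norm u = 1" and c0: "c0 \<in> X'" and e: "\<bar>e - u \<bullet> c0\<bar> < eps" and K: "K > 0"
  shows "\<exists>k\<ge>K. \<forall>a b. sampled_tanh_net XX (\<lambda>x. a * tanh (k * (u \<bullet> x - e)) + b)"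
proof -
  define p where "p = u \<bullet> c0"
  define r where "r = min (eps - \<bar>e - p\<bar>) (s1 / K)"
  have r: "r > 0" using e K s1_pos by (auto simp: r_def p_def)
  have "r \<le> s1 / K" by (simp add: r_def)
  then have "r * K \<le> s1" using K by (simp add: pos_le_divide_eq)
  then have rK: "s1 / r \<ge> K" using r by (simp add: pos_le_divide_eq mult.commute)
  define y where "y = c0 + (e - p - r/2) *\<^sub>R u"
  have r_le: "r \<le> eps - \<bar>e - p\<bar>" by (simp add: r_def)
  have y: "y \<in> XX" unfolding y_def
    by (rule inXX_line[OF c0 u]) (use r r_le in arith)
  have y2: "y + r *\<^sub>R u = c0 + (e - p + r/2) *\<^sub>R u" unfolding y_def
    by (simp add: algebra_simps) (metis field_sum_of_halves scaleR_add_left)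
  have y2X: "y + r *\<^sub>R u \<in> XX" unfolding y2
    by (rule inXX_line[OF c0 u]) (use r r_le in arith)
  have uy: "u \<bullet> y = e - r/2"
    using u unfolding y_def p_def by (simp add: inner_add_right power2_norm_eq_inner[symmetric])
  have "s1 / r * (u \<bullet> x - u \<bullet> y) - s2 = s1 / r * (u \<bullet> x - e)" for x
    unfolding uy using r s1_eq by (simp add: field_simps)
  then show ?thesis using dir_neuron[OF u y y2X r] rK by (intro exI[of _ "s1/r"]) auto
qed

end


context nbhd begin

definition Q where "Q u c \<longleftrightarrow> (\<forall>h::real\<Rightarrow>real. continuous_on UNIV h \<longrightarrow>
   (\<forall>\<epsilon>>0. \<exists>\<Psi>. sampled_tanh_net XX \<Psi> \<and> (\<forall>x\<in>XX. \<bar>\<Psi> x - h (max c (u \<bullet> x))\<bar> < \<epsilon>)))"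

lemma QD:
  fixes h :: "real \<Rightarrow> real" and \<epsilon> :: real and c :: real and u :: 'a
  assumes "Q u c" "continuous_on UNIV h" "\<epsilon> > 0"
  obtains \<Psi> where "sampled_tanh_net XX \<Psi>" "\<And>x. x \<in> XX \<Longrightarrow> \<bar>\<Psi> x - h (max c (u \<bullet> x))\<bar> < \<epsilon>"
  using assms(1)[unfolded Q_def, rule_format, OF assms(2) assms(3)] that by blast

lemma Q_mono:
  assumes "Q u c" "c \<le> c'"
  shows "Q u c'"
  unfolding Q_def
proof (intro allI impI)
  fix h :: "real \<Rightarrow> real" and \<epsilon> :: real
  assume h: "continuous_on UNIV h" and e: "\<epsilon> > 0"
  have "continuous_on UNIV (\<lambda>t. h (max c' t))"
    by (rule continuous_on_compose2[OF h]) (auto intro: continuous_intros)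
  from QD[OF assms(1) this e] obtain \<Psi> where "sampled_tanh_net XX \<Psi>"
    "\<And>x. x \<in> XX \<Longrightarrow> \<bar>\<Psi> x - h (max c' (max c (u \<bullet> x)))\<bar> < \<epsilon>" by blast
  moreover have "max c' (max c t) = max c' t" for t using assms(2) by linarith
  ultimately show "\<exists>\<Psi>. sampled_tanh_net XX \<Psi> \<and> (\<forall>x\<in>XX. \<bar>\<Psi> x - h (max c' (u \<bullet> x))\<bar> < \<epsilon>)"
    by auto
qed

lemma Q_top:
  assumes "\<forall>x\<in>XX. u \<bullet> x \<le> c"
  shows "Q u c"
  unfolding Q_def
proof (intro allI impI)
  fix h :: "real \<Rightarrow> real" and \<epsilon> :: real
  assume h: "continuous_on UNIV h" and e: "\<epsilon> > 0"
  have "max c (u \<bullet> x) = c" if "x \<in> XX" for x using assms that by (simp add: max_absorb1)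
  then have "\<forall>x\<in>XX. \<bar>(\<lambda>x. h c) x - h (max c (u \<bullet> x))\<bar> < \<epsilon>"
    using e by simp
  then show "\<exists>\<Psi>. sampled_tanh_net XX \<Psi> \<and> (\<forall>x\<in>XX. \<bar>\<Psi> x - h (max c (u \<bullet> x))\<bar> < \<epsilon>)"
    using net_const by blast
qed

lemma Q_lim:
  assumes u: "norm u = 1" and A: "\<forall>c'>c. Q u c'"
  shows "Q u c"
  unfolding Q_def
proof (intro allI impI)
  fix h :: "real \<Rightarrow> real" and \<epsilon> :: real
  assume h: "continuous_on UNIV h" and e: "\<epsilon> > 0"
  obtain B where B: "\<forall>x\<in>XX. norm x \<le> B" using XX_bound by blast
  define K where "K = {c .. \<bar>c\<bar> + \<bar>B\<bar> + 1}"
  have "uniformly_continuous_on K h"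
    by (rule compact_uniformly_continuous) (auto simp: K_def intro: continuous_on_subset[OF h])
  then obtain d where d: "d > 0" and dd: "\<forall>s\<in>K. \<forall>t\<in>K. dist t s < d \<longrightarrow> dist (h t) (h s) < \<epsilon>/2"
    unfolding uniformly_continuous_on_def using e by (meson half_gt_zero)
  define c' where "c' = c + min (d/2) 1"
  have "c' > c" using d by (simp add: c'_def)
  with A have "Q u c'" by blast
  from QD[OF this h, of "\<epsilon>/2"] e obtain \<Psi> where net: "sampled_tanh_net XX \<Psi>"
    and P: "\<And>x. x \<in> XX \<Longrightarrow> \<bar>\<Psi> x - h (max c' (u \<bullet> x))\<bar> < \<epsilon>/2" by auto
  have "\<bar>\<Psi> x - h (max c (u \<bullet> x))\<bar> < \<epsilon>" if x: "x \<in> XX" for x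
  proof -
    have t: "\<bar>u \<bullet> x\<bar> \<le> \<bar>B\<bar>" using abs_inner_unit[OF u, of x] B x by force
    have m1: "max c (u \<bullet> x) \<in> K" using t by (auto simp: K_def)
    have m2: "max c' (u \<bullet> x) \<in> K" using t d by (auto simp: K_def c'_def)
    have "dist (max c' (u \<bullet> x)) (max c (u \<bullet> x)) < d" using d by (auto simp: dist_real_def c'_def)
    then have "\<bar>h (max c' (u \<bullet> x)) - h (max c (u \<bullet> x))\<bar> < \<epsilon>/2"
      using dd m1 m2 by (auto simp: dist_real_def)
    then show ?thesis using P[OF x] by linarith
  qed
  then show "\<exists>\<Psi>. sampled_tanh_net XX \<Psi> \<and> (\<forall>x\<in>XX. \<bar>\<Psi> x - h (max c (u \<bullet> x))\<bar> < \<epsilon>)"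
    using net by blast
qed

lemma dichot:
  assumes u: "norm u = 1"
  shows "\<exists>\<delta>>0. (\<forall>e. c - \<delta> < e \<and> e < c \<longrightarrow> (\<exists>c0\<in>X'. \<bar>e - u \<bullet> c0\<bar> < eps))
              \<or> (\<forall>x\<in>XX. \<not> (c - \<delta> < u \<bullet> x \<and> u \<bullet> x < c))"
proof (cases "\<exists>c0\<in>X'. u \<bullet> c0 - eps < c \<and> c \<le> u \<bullet> c0 + eps")
  case True
  then obtain c0 where c0: "c0 \<in> X'" "u \<bullet> c0 - eps < c" "c \<le> u \<bullet> c0 + eps" by blast
  have "\<forall>e. c - (c - (u \<bullet> c0 - eps)) < e \<and> e < c \<longrightarrow> (\<exists>c0\<in>X'. \<bar>e - u \<bullet> c0\<bar> < eps)"
    using c0 by (intro allI impI bexI[of _ c0]) auto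
  then show ?thesis using c0(2) by (intro exI[of _ "c - (u \<bullet> c0 - eps)"]) auto
next
  case False
  then have F: "\<forall>c0\<in>X'. c \<le> u \<bullet> c0 - eps \<or> u \<bullet> c0 + eps < c" by force
  define L where "L = X' \<inter> {z. u \<bullet> z \<le> c - eps}"
  show ?thesis
  proof (cases "L = {}")
    case True
    have "\<forall>x\<in>XX. \<not> (c - 1 < u \<bullet> x \<and> u \<bullet> x < c)"
    proof (intro ballI notI)
      fix x assume x: "x \<in> XX" and "c - 1 < u \<bullet> x \<and> u \<bullet> x < c"
      obtain c0 where c0: "c0 \<in> X'" "\<bar>u \<bullet> x - u \<bullet> c0\<bar> \<le> eps" using proj_near[OF u x] by blast
      have "c \<le> u \<bullet> c0 - eps" using F c0 True unfolding L_def by force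
      then show False using c0 \<open>c - 1 < u \<bullet> x \<and> u \<bullet> x < c\<close> by linarith
    qed
    then show ?thesis by (intro exI[of _ 1]) auto
  next
    case False
    have "compact L" unfolding L_def using cpt closed_halfspace_le by blast
    then have "compact ((\<lambda>z. u \<bullet> z) ` L)"
      by (rule compact_continuous_image[rotated]) (auto intro: continuous_intros)
    then obtain q where q: "q \<in> (\<lambda>z. u \<bullet> z) ` L" "\<forall>t\<in>(\<lambda>z. u \<bullet> z) ` L. t \<le> q"
      using compact_attains_sup[of "(\<lambda>z. u \<bullet> z) ` L"] False by blast
    have qlt: "q + eps < c" using q(1) F eps_pos unfolding L_def by force
    have "\<forall>x\<in>XX. \<not> (c - (c - q - eps) < u \<bullet> x \<and> u \<bullet> x < c)"
    proof (intro ballI notI)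
      fix x assume x: "x \<in> XX" and xx: "c - (c - q - eps) < u \<bullet> x \<and> u \<bullet> x < c"
      obtain c0 where c0: "c0 \<in> X'" "\<bar>u \<bullet> x - u \<bullet> c0\<bar> \<le> eps" using proj_near[OF u x] by blast
      show False
      proof (cases "c0 \<in> L")
        case True
        then have "u \<bullet> c0 \<le> q" using q(2) by blast
        then show False using c0 xx by linarith
      next
        case False
        then have "c \<le> u \<bullet> c0 - eps" using F c0 unfolding L_def by force
        then show False using c0 xx by linarith
      qed
    qed
    then show ?thesis using qlt by (intro exI[of _ "c - q - eps"]) auto
  qed
qed

end


lemma cosh_real_ne0: "cosh (z::real) \<noteq> 0" using cosh_real_pos[of z] by simp

lemma uu1: "norm (u::'a::real_inner) = 1 \<Longrightarrow> u \<bullet> u = 1"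
  by (metis power2_norm_eq_inner power_one)

lemma err_combine:
  fixes A B D g :: real
  assumes "\<bar>A\<bar> < e1" "\<bar>B\<bar> \<le> 2 * \<eta>" "\<bar>D\<bar> * (2 * \<eta>) \<le> e2"
  shows "\<bar>A + D * B\<bar> < e1 + e2"
proof -
  have "\<bar>D * B\<bar> \<le> \<bar>D\<bar> * (2 * \<eta>)" unfolding abs_mult by (rule mult_left_mono) (use assms in auto)
  then show ?thesis using assms abs_triangle_ineq[of A "D * B"] by linarith
qed

context nbhd begin

lemma Q_gap:
  assumes u: "norm u = 1" and Qc: "Q u c" and d: "\<delta> > 0"
    and gap: "\<forall>x\<in>XX. \<not> (c - \<delta> < u \<bullet> x \<and> u \<bullet> x < c)"
  shows "Q u (c - \<delta>/2)"
  unfolding Q_def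
proof (intro allI impI)
  fix h :: "real \<Rightarrow> real" and \<epsilon> :: real
  assume h: "continuous_on UNIV h" and e: "\<epsilon> > 0"
  show "\<exists>\<Psi>. sampled_tanh_net XX \<Psi> \<and> (\<forall>x\<in>XX. \<bar>\<Psi> x - h (max (c - \<delta>/2) (u \<bullet> x))\<bar> < \<epsilon>)"
  proof (cases "\<exists>x\<in>XX. c \<le> u \<bullet> x")
    case False
    then have "max (c - \<delta>/2) (u \<bullet> x) = c - \<delta>/2" if "x \<in> XX" for x
      using gap that d by force
    then show ?thesis using net_const[of XX "h (c - \<delta>/2)"] e
      by (intro exI[of _ "\<lambda>x. h (c - \<delta>/2)"]) auto
  next
    case True
    define S where "S = (\<lambda>x. u \<bullet> x) ` XX \<inter> {c..}"
    have "compact ((\<lambda>x. u \<bullet> x) ` XX)"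
      by (rule compact_continuous_image) (auto intro: continuous_intros XX_compact)
    then have "compact S" unfolding S_def by (intro compact_Int_closed) auto
    moreover have "S \<noteq> {}" using True unfolding S_def by auto
    ultimately obtain \<alpha> where \<alpha>: "\<alpha> \<in> S" "\<forall>t\<in>S. \<alpha> \<le> t"
      using compact_attains_inf by blast
    obtain y0 where y0: "y0 \<in> XX" "u \<bullet> y0 = \<alpha>" "c \<le> \<alpha>" using \<alpha>(1) unfolding S_def by auto
    obtain c0 where c0: "c0 \<in> X'" "\<bar>\<alpha> - u \<bullet> c0\<bar> \<le> eps" using proj_near[OF u y0(1)] y0(2) by auto
    define p where "p = u \<bullet> c0"
    have uu: "u \<bullet> u = 1" using uu1[OF u] .
    have \<alpha>lt: "\<alpha> < p + eps"
    proof (rule ccontr)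
      assume "\<not> \<alpha> < p + eps"
      then have \<alpha>eq: "\<alpha> = p + eps" using c0 unfolding p_def by arith
      define \<mu> where "\<mu> = min eps (\<delta>/2)"
      have \<mu>: "0 < \<mu>" "\<mu> \<le> eps" "\<mu> \<le> \<delta>/2" using eps_pos d by (auto simp: \<mu>_def)
      have z: "c0 + (eps - \<mu>) *\<^sub>R u \<in> XX" by (rule inXX_line[OF c0(1) u]) (use \<mu> in arith)
      have uz: "u \<bullet> (c0 + (eps - \<mu>) *\<^sub>R u) = \<alpha> - \<mu>"
        using uu \<alpha>eq by (simp add: inner_add_right p_def)
      show False
      proof (cases "c \<le> \<alpha> - \<mu>")
        case True
        then have "\<alpha> - \<mu> \<in> S" using z uz unfolding S_def by force
        then show False using \<alpha>(2) \<mu> by force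
      next
        case False
        then show False using gap z uz \<mu> y0(3) by force
      qed
    qed
    define y where "y = c0 + (\<alpha> - p) *\<^sub>R u"
    have y: "y \<in> XX" unfolding y_def by (rule inXX_line[OF c0(1) u]) (use c0 in \<open>simp add: p_def\<close>)
    have uy: "u \<bullet> y = \<alpha>" using uu by (simp add: y_def inner_add_right p_def)
    define c' where "c' = c - \<delta>/2"
    define \<Delta> where "\<Delta> = h c' - h c"
    obtain \<Psi>0 where net0: "sampled_tanh_net XX \<Psi>0"
      and P0: "\<And>x. x \<in> XX \<Longrightarrow> \<bar>\<Psi>0 x - h (max c (u \<bullet> x))\<bar> < \<epsilon>/2"
      using QD[OF Qc h, of "\<epsilon>/2"] e by auto
    define m0 where "m0 = tanh (- s2)"
    define \<gamma> where "\<gamma> = -1 - m0"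
    have \<gamma>: "\<gamma> < 0" unfolding \<gamma>_def m0_def using tanh_real_gt_neg1[of "-s2"] by simp
    define \<eta> where "\<eta> = \<epsilon> * \<bar>\<gamma>\<bar> / (8 * (\<bar>\<Delta>\<bar> + 1))"
    have \<eta>: "\<eta> > 0" unfolding \<eta>_def using e \<gamma> by (intro divide_pos_pos mult_pos_pos) auto
    obtain M where M: "M > 0" "\<forall>z\<ge>M. tanh z \<ge> 1 - \<eta>" using tanh_big[OF \<eta>] by blast
    define r where "r = min (p + eps - \<alpha>) (s1 * \<delta> / M)"
    have r: "r > 0" using \<alpha>lt s1_pos d M by (auto simp: r_def)
    have y2: "y + r *\<^sub>R u = c0 + (\<alpha> - p + r) *\<^sub>R u" by (simp add: y_def algebra_simps)
    have y2X: "y + r *\<^sub>R u \<in> XX" unfolding y2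
      by (rule inXX_line[OF c0(1) u]) (use c0 r in \<open>auto simp: p_def r_def\<close>)
    define ht where "ht = (\<lambda>t. tanh (s1 / r * (t - \<alpha>) - s2))"
    have ht_cont: "continuous_on UNIV ht"
      unfolding ht_def by (intro continuous_intros) (auto simp: cosh_real_ne0)
    have Q\<alpha>: "Q u \<alpha>" by (rule Q_mono[OF Qc y0(3)])
    obtain \<Psi>1 where net1: "sampled_tanh_net XX \<Psi>1"
      and P1: "\<And>x. x \<in> XX \<Longrightarrow> \<bar>\<Psi>1 x - ht (max \<alpha> (u \<bullet> x))\<bar> < \<eta>"
      using QD[OF Q\<alpha> ht_cont \<eta>] by auto
    define N where "N = (\<lambda>x. tanh (s1 / r * (u \<bullet> x - u \<bullet> y) - s2))"
    have netN: "sampled_tanh_net XX (\<lambda>x. (\<Delta>/\<gamma>) * N x + 0)"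
      unfolding N_def by (rule dir_neuron[OF u y y2X r])
    define \<Psi> where "\<Psi> = (\<lambda>x. (\<Psi>0 x + ((\<Delta>/\<gamma>) * N x + 0)) + (- (\<Delta>/\<gamma>)) *\<^sub>R \<Psi>1 x)"
    have net: "sampled_tanh_net XX \<Psi>"
      unfolding \<Psi>_def by (intro net_add net0 netN net_scale net1)
    have key: "\<bar>\<Delta>/\<gamma>\<bar> * (2 * \<eta>) \<le> \<epsilon>/4"
    proof -
      have eq: "\<bar>\<Delta>/\<gamma>\<bar> * (2 * \<eta>) = \<epsilon>/4 * (\<bar>\<Delta>\<bar> / (\<bar>\<Delta>\<bar> + 1))"
        unfolding \<eta>_def using \<gamma> by (simp add: abs_divide field_simps)
      have "\<epsilon>/4 * (\<bar>\<Delta>\<bar> / (\<bar>\<Delta>\<bar> + 1)) \<le> \<epsilon>/4 * 1"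
        by (rule mult_left_mono) (use e in auto)
      then show ?thesis unfolding eq by simp
    qed
    have "\<bar>\<Psi> x - h (max c' (u \<bullet> x))\<bar> < \<epsilon>" if x: "x \<in> XX" for x
    proof (cases "c \<le> u \<bullet> x")
      case True
      then have "u \<bullet> x \<in> S" using x unfolding S_def by auto
      then have ax: "\<alpha> \<le> u \<bullet> x" using \<alpha>(2) by blast
      have m1: "max c' (u \<bullet> x) = u \<bullet> x" "max c (u \<bullet> x) = u \<bullet> x" "max \<alpha> (u \<bullet> x) = u \<bullet> x"
        using True ax d by (auto simp: c'_def)
      have "ht (u \<bullet> x) = N x" unfolding ht_def N_def uy ..
      then have B: "\<bar>N x - \<Psi>1 x\<bar> \<le> 2 * \<eta>" using P1[OF x] \<eta> unfolding m1 by linarith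
      have "\<Psi> x - h (max c' (u \<bullet> x)) = (\<Psi>0 x - h (max c (u \<bullet> x))) + (\<Delta>/\<gamma>) * (N x - \<Psi>1 x)"
        unfolding \<Psi>_def m1 by (simp add: algebra_simps)
      also have "\<bar>\<dots>\<bar> < \<epsilon>/2 + \<epsilon>/4" by (rule err_combine[OF P0[OF x] B key])
      finally show ?thesis using e by linarith
    next
      case False
      then have tx: "u \<bullet> x \<le> c - \<delta>" using gap x by force
      have m1: "max c' (u \<bullet> x) = c'" "max c (u \<bullet> x) = c" "max \<alpha> (u \<bullet> x) = \<alpha>"
        using False tx y0(3) d by (auto simp: c'_def)
      have "ht \<alpha> = m0" unfolding ht_def m0_def by simp
      then have B1: "\<bar>\<Psi>1 x - m0\<bar> < \<eta>" using P1[OF x] unfolding m1 by simp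
      have "s1 / r * \<delta> \<ge> M"
      proof -
        have "r \<le> s1 * \<delta> / M" by (simp add: r_def)
        then have "r * M \<le> s1 * \<delta>" using M by (simp add: pos_le_divide_eq)
        then show ?thesis using r by (simp add: pos_le_divide_eq mult.commute)
      qed
      moreover have "s1 / r * (u \<bullet> x - \<alpha>) \<le> s1 / r * (- \<delta>)"
        using tx y0(3) r s1_pos by (intro mult_left_mono) auto
      ultimately have arg: "s1 / r * (u \<bullet> x - \<alpha>) - s2 \<le> - M" using s2_pos by linarith
      have "N x \<le> tanh (- M)" unfolding N_def uy using arg by (simp del: tanh_minus)
      also have "\<dots> \<le> \<eta> - 1" using M(2) by force
      finally have "N x \<le> \<eta> - 1" .
      moreover have "N x > -1" unfolding N_def by (rule tanh_real_gt_neg1)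
      ultimately have B2: "\<bar>N x + 1\<bar> \<le> \<eta>" by linarith
      have B: "\<bar>N x - \<Psi>1 x - \<gamma>\<bar> \<le> 2 * \<eta>" using B1 B2 unfolding \<gamma>_def by linarith
      have "\<Psi> x - h (max c' (u \<bullet> x)) = (\<Psi>0 x - h (max c (u \<bullet> x))) + (\<Delta>/\<gamma>) * (N x - \<Psi>1 x - \<gamma>)"
        unfolding \<Psi>_def m1 \<Delta>_def using \<gamma> by (simp add: field_simps)
      also have "\<bar>\<dots>\<bar> < \<epsilon>/2 + \<epsilon>/4" by (rule err_combine[OF P0[OF x] B key])
      finally show ?thesis using e by linarith
    qed
    then show ?thesis using net unfolding c'_def by blast
  qed
qed

end


context nbhd begin

lemma Q_int:
  assumes u: "norm u = 1" and Qc: "Q u c" and d: "\<delta> > 0"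
    and int: "\<forall>e. c - \<delta> < e \<and> e < c \<longrightarrow> (\<exists>c0\<in>X'. \<bar>e - u \<bullet> c0\<bar> < eps)"
  shows "Q u (c - \<delta>/2)"
  unfolding Q_def
proof (intro allI impI)
  fix h :: "real \<Rightarrow> real" and \<epsilon> :: real
  assume h: "continuous_on UNIV h" and e: "\<epsilon> > 0"
  define c' where "c' = c - \<delta>/2"
  define L where "L = \<delta>/2"
  have L: "L > 0" using d by (simp add: L_def)
  define \<omega> where "\<omega> = \<epsilon>/16"
  have \<omega>: "\<omega> > 0" using e by (simp add: \<omega>_def)
  define K where "K = {c'..c}"
  have "uniformly_continuous_on K h"
    by (rule compact_uniformly_continuous) (auto simp: K_def intro: continuous_on_subset[OF h])
  then obtain \<theta> where \<theta>: "\<theta> > 0" and th: "\<forall>s\<in>K. \<forall>t\<in>K. dist t s < \<theta> \<longrightarrow> dist (h t) (h s) < \<omega>"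
    unfolding uniformly_continuous_on_def using \<omega> by blast
  obtain n :: nat where n: "L / \<theta> < real n" using reals_Archimedean2 by blast
  have npos: "real n > 0" using n L \<theta> by (smt (verit) divide_pos_pos)
  have Ln: "L / n < \<theta>" using n npos \<theta> by (simp add: divide_less_eq mult.commute)
  define q where "q = L / n"
  have Lnpos: "q > 0" using L npos by (simp add: q_def)
  have Ln': "q < \<theta>" using Ln by (simp add: q_def)
  define dd where "dd j = c' + real j * q" for j :: nat
  define ee where "ee j = c' + (real j + 1/2) * q" for j :: nat
  define \<rho> where "\<rho> = q / 4"
  have \<rho>: "\<rho> > 0" using Lnpos by (simp add: \<rho>_def)
  have ee_dd: "ee j = dd j + q / 2" for j by (simp add: ee_def dd_def algebra_simps)
  have dd_Suc: "dd (Suc j) = dd j + q" for j by (simp add: dd_def algebra_simps)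
  have dd0: "dd 0 = c'" and ddn: "dd n = c" using npos by (auto simp: dd_def c'_def L_def q_def)
  have dd_mono: "dd a \<le> dd b \<longleftrightarrow> a \<le> b" for a b
  proof -
    have "real a * q \<le> real b * q \<longleftrightarrow> real a \<le> real b"
      by (rule mult_le_cancel_right_pos[OF Lnpos])
    then show ?thesis unfolding dd_def by (simp only: add_le_cancel_left of_nat_le_iff)
  qed
  have ddK: "j \<le> n \<Longrightarrow> dd j \<in> K" for j
  proof -
    assume "j \<le> n"
    then have "dd j \<le> dd n" using dd_mono by blast
    moreover have "dd 0 \<le> dd j" using dd_mono by blast
    ultimately show ?thesis using dd0 ddn by (simp add: K_def)
  qed
  define \<Delta> where "\<Delta> j = h (dd j) - h (dd (Suc j))" for j
  have \<Delta>: "\<bar>\<Delta> j\<bar> < \<omega>" if "j < n" for j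
  proof -
    have "dist (dd j) (dd (Suc j)) = q" using Lnpos by (simp add: dist_real_def dd_Suc)
    then have "dist (dd j) (dd (Suc j)) < \<theta>" using Ln' by simp
    then show ?thesis using th ddK[of j] ddK[of "Suc j"] that by (auto simp: \<Delta>_def dist_real_def)
  qed
  define \<eta> where "\<eta> = 1 / real n"
  have \<eta>: "\<eta> > 0" using npos by (simp add: \<eta>_def)
  obtain M where M: "M > 0" "\<forall>z\<ge>M. tanh z \<ge> 1 - \<eta>" using tanh_big[OF \<eta>] by blast
  define K0 where "K0 = M / \<rho>"
  have K0: "K0 > 0" using M \<rho> by (simp add: K0_def)
  have ee_in: "c - \<delta> < ee j \<and> ee j < c" if "j < n" for j
  proof -
    have "real j + 1/2 < real n" using that by linarith
    then have "(real j + 1/2) * q < real n * q" using Lnpos by (intro mult_strict_right_mono) auto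
    then have "ee j < c" using npos by (simp add: ee_def c'_def L_def q_def)
    moreover have "0 \<le> (real j + 1/2) * q" using Lnpos by (intro mult_nonneg_nonneg) auto
    then have "c - \<delta> < ee j" using d by (simp add: ee_def c'_def)
    ultimately show ?thesis by simp
  qed
  have "\<forall>j\<in>{..<n}. \<exists>k. k \<ge> K0 \<and> (\<forall>a b. sampled_tanh_net XX (\<lambda>x. a * tanh (k * (u \<bullet> x - ee j)) + b))"
  proof
    fix j assume "j \<in> {..<n}"
    then obtain c0 where "c0 \<in> X'" "\<bar>ee j - u \<bullet> c0\<bar> < eps" using int ee_in by blast
    then show "\<exists>k. k \<ge> K0 \<and> (\<forall>a b. sampled_tanh_net XX (\<lambda>x. a * tanh (k * (u \<bullet> x - ee j)) + b))"
      using sharp_neuron[OF u _ _ K0] by blast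
  qed
  then obtain kk where kk: "\<And>j. j < n \<Longrightarrow> kk j \<ge> K0"
    and kknet: "\<And>j a b. j < n \<Longrightarrow> sampled_tanh_net XX (\<lambda>x. a * tanh (kk j * (u \<bullet> x - ee j)) + b)"
    using bchoice[of "{..<n}"] by (metis lessThan_iff)
  obtain \<Psi>0 where net0: "sampled_tanh_net XX \<Psi>0"
    and P0: "\<And>x. x \<in> XX \<Longrightarrow> \<bar>\<Psi>0 x - h (max c (u \<bullet> x))\<bar> < \<epsilon>/2"
    using QD[OF Qc h, of "\<epsilon>/2"] e by auto
  define T where "T j x = tanh (kk j * (u \<bullet> x - ee j))" for j x
  define \<Psi> where "\<Psi> = (\<lambda>x. \<Psi>0 x + (\<Sum>j<n. (- \<Delta> j / 2) * T j x + \<Delta> j / 2))"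
  have net: "sampled_tanh_net XX \<Psi>"
    unfolding \<Psi>_def T_def
    apply (rule net_add[OF net0])
    apply (rule net_sum)
     apply simp
    apply (rule kknet)
    apply simp
    done
  have Vlow: "T j x \<le> \<eta> - 1" if "j < n" "u \<bullet> x \<le> dd j" for j x
  proof -
    have "u \<bullet> x - ee j \<le> - \<rho>" using that Lnpos unfolding ee_dd \<rho>_def by linarith
    then have "kk j * (u \<bullet> x - ee j) \<le> K0 * (u \<bullet> x - ee j)"
      using kk[OF that(1)] \<rho> by (intro mult_right_mono_neg) auto
    also have "\<dots> \<le> K0 * (- \<rho>)" using \<open>u \<bullet> x - ee j \<le> - \<rho>\<close> K0 by (intro mult_left_mono) auto
    also have "\<dots> = - M" using \<rho> by (simp add: K0_def)
    finally have "T j x \<le> tanh (- M)" unfolding T_def by (simp del: tanh_minus)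
    also have "\<dots> \<le> \<eta> - 1" using M(2) by force
    finally show ?thesis .
  qed
  have Vhigh: "T j x \<ge> 1 - \<eta>" if "j < n" "u \<bullet> x \<ge> dd (Suc j)" for j x
  proof -
    have r1: "u \<bullet> x - ee j \<ge> \<rho>" using that Lnpos unfolding ee_dd \<rho>_def dd_Suc by linarith
    have "M = K0 * \<rho>" using \<rho> by (simp add: K0_def)
    also have "\<dots> \<le> K0 * (u \<bullet> x - ee j)" using r1 K0 by (intro mult_left_mono) auto
    also have "\<dots> \<le> kk j * (u \<bullet> x - ee j)" using kk[OF that(1)] r1 \<rho> by (intro mult_right_mono) auto
    finally show ?thesis using M(2) unfolding T_def by blast
  qed
  define P where "P x j \<longleftrightarrow> dd j < u \<bullet> x \<and> u \<bullet> x < dd (Suc j)" for x j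
  define D where "D x j = h (max (dd j) (u \<bullet> x)) - h (max (dd (Suc j)) (u \<bullet> x))" for x j
  have step: "\<bar>((- \<Delta> j / 2) * T j x + \<Delta> j / 2) - D x j\<bar> \<le> \<omega> * \<eta> + (if P x j then 2 * \<omega> else 0)"
    if j: "j < n" for j x
  proof -
    have Tb: "-1 < T j x" "T j x < 1" unfolding T_def by (auto intro: tanh_real_gt_neg1 tanh_real_lt_1)
    have eq: "(- \<Delta> j / 2) * T j x + \<Delta> j / 2 = \<Delta> j * ((1 - T j x) / 2)" by (simp add: algebra_simps)
    have aD: "\<bar>\<Delta> j\<bar> \<le> \<omega>" using \<Delta>[OF j] by simp
    consider (lo) "u \<bullet> x \<le> dd j" | (hi) "u \<bullet> x \<ge> dd (Suc j)" | (mid) "P x j"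
      unfolding P_def by linarith
    then show ?thesis
    proof cases
      case lo
      have "dd j \<le> dd (Suc j)" using dd_mono by simp
      then have "max (dd j) (u \<bullet> x) = dd j" "max (dd (Suc j)) (u \<bullet> x) = dd (Suc j)"
        using lo by linarith+
      then have "D x j = \<Delta> j" by (simp add: D_def \<Delta>_def)
      then have e1: "((- \<Delta> j / 2) * T j x + \<Delta> j / 2) - D x j = \<Delta> j * (- (1 + T j x) / 2)"
        by (simp add: algebra_simps)
      have e2: "\<bar>- (1 + T j x) / 2\<bar> \<le> \<eta>" using Vlow[OF j lo] Tb \<eta> by simp
      have "\<bar>\<Delta> j * (- (1 + T j x) / 2)\<bar> \<le> \<omega> * \<eta>"
        unfolding abs_mult by (rule mult_mono) (use aD e2 \<omega> in auto)
      then have "\<bar>((- \<Delta> j / 2) * T j x + \<Delta> j / 2) - D x j\<bar> \<le> \<omega> * \<eta>"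
        unfolding e1 .
      then show ?thesis using \<omega> by simp
    next
      case hi
      have "dd j \<le> dd (Suc j)" using dd_mono by simp
      then have "max (dd j) (u \<bullet> x) = u \<bullet> x" "max (dd (Suc j)) (u \<bullet> x) = u \<bullet> x"
        using hi by linarith+
      then have "D x j = 0" by (simp add: D_def)
      have e2: "\<bar>(1 - T j x) / 2\<bar> \<le> \<eta>" using Vhigh[OF j hi] Tb \<eta> by simp
      have "\<bar>\<Delta> j * ((1 - T j x) / 2)\<bar> \<le> \<omega> * \<eta>"
        unfolding abs_mult by (rule mult_mono) (use aD e2 \<omega> in auto)
      then have "\<bar>((- \<Delta> j / 2) * T j x + \<Delta> j / 2) - D x j\<bar> \<le> \<omega> * \<eta>"
        unfolding eq \<open>D x j = 0\<close> by simp
      then show ?thesis using \<omega> by simp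
    next
      case mid
      have "max (dd j) (u \<bullet> x) = u \<bullet> x" "max (dd (Suc j)) (u \<bullet> x) = dd (Suc j)"
        using mid unfolding P_def by linarith+
      then have "D x j = h (u \<bullet> x) - h (dd (Suc j))" by (simp add: D_def)
      moreover have "\<bar>h (u \<bullet> x) - h (dd (Suc j))\<bar> < \<omega>"
      proof -
        have "dd j \<in> K" "dd (Suc j) \<in> K" using ddK j by auto
        then have "u \<bullet> x \<in> K" using mid by (auto simp: K_def P_def)
        moreover have "dist (dd (Suc j)) (u \<bullet> x) < \<theta>"
          using mid Ln' by (simp add: P_def dist_real_def dd_Suc)
        ultimately show ?thesis using th ddK[of "Suc j"] j by (force simp: dist_real_def abs_minus_commute)
      qed
      moreover have "\<bar>\<Delta> j * ((1 - T j x) / 2)\<bar> \<le> \<omega>"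
      proof -
        have "\<bar>(1 - T j x) / 2\<bar> \<le> 1" using Tb by simp
        have "\<bar>\<Delta> j\<bar> * \<bar>(1 - T j x) / 2\<bar> \<le> \<omega> * 1"
          by (rule mult_mono) (use aD \<open>\<bar>(1 - T j x) / 2\<bar> \<le> 1\<close> \<omega> in auto)
        then show ?thesis unfolding abs_mult by simp
      qed
      ultimately have "\<bar>((- \<Delta> j / 2) * T j x + \<Delta> j / 2) - D x j\<bar> \<le> 2 * \<omega>"
        unfolding eq by linarith
      then show ?thesis using mid mult_pos_pos[OF \<omega> \<eta>] by simp
    qed
  qed
  have card1: "card {j \<in> {..<n}. P x j} \<le> 1" for x
  proof -
    have "\<forall>a\<in>{j \<in> {..<n}. P x j}. \<forall>b\<in>{j \<in> {..<n}. P x j}. a = b"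
    proof (intro ballI, rule ccontr)
      fix a b assume a: "a \<in> {j \<in> {..<n}. P x j}" and b: "b \<in> {j \<in> {..<n}. P x j}" and "a \<noteq> b"
      then consider "a < b" | "b < a" by linarith
      then show False
      proof cases
        case 1
        then have "dd (Suc a) \<le> dd b" using dd_mono by simp
        then show False using a b by (auto simp: P_def)
      next
        case 2
        then have "dd (Suc b) \<le> dd a" using dd_mono by simp
        then show False using a b by (auto simp: P_def)
      qed
    qed
    then show ?thesis using card_le_Suc0_iff_eq[of "{j \<in> {..<n}. P x j}"] by auto
  qed
  have "\<bar>\<Psi> x - h (max c' (u \<bullet> x))\<bar> < \<epsilon>" if x: "x \<in> XX" for x
  proof -
    have tel: "h (max c' (u \<bullet> x)) - h (max c (u \<bullet> x)) = (\<Sum>j<n. D x j)"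
      unfolding D_def using sum_lessThan_telescope'[of "\<lambda>j. h (max (dd j) (u \<bullet> x))" n] dd0 ddn by simp
    have eq: "\<Psi> x - h (max c' (u \<bullet> x)) = (\<Psi>0 x - h (max c (u \<bullet> x)))
        + (\<Sum>j<n. ((- \<Delta> j / 2) * T j x + \<Delta> j / 2) - D x j)"
      unfolding \<Psi>_def sum_subtractf tel[symmetric] by simp
    have "\<bar>\<Sum>j<n. ((- \<Delta> j / 2) * T j x + \<Delta> j / 2) - D x j\<bar>
        \<le> (\<Sum>j<n. \<bar>((- \<Delta> j / 2) * T j x + \<Delta> j / 2) - D x j\<bar>)" by (rule sum_abs)
    also have "\<dots> \<le> (\<Sum>j<n. \<omega> * \<eta> + (if P x j then 2 * \<omega> else 0))"
      by (rule sum_mono) (use step in auto)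
    also have "\<dots> = \<omega> + real (card {j \<in> {..<n}. P x j}) * (2 * \<omega>)"
    proof -
      have a: "(\<Sum>j<n. if P x j then 2 * \<omega> else 0) = real (card {j \<in> {..<n}. P x j}) * (2 * \<omega>)"
        using sum.inter_filter[of "{..<n}" "\<lambda>_. 2 * \<omega>" "P x"] by simp
      have b: "real n * (\<omega> * \<eta>) = \<omega>" using npos by (simp add: \<eta>_def)
      show ?thesis unfolding sum.distrib a using b by simp
    qed
    also have "\<dots> \<le> \<omega> + 1 * (2 * \<omega>)"
      using card1[of x] \<omega> by (intro add_left_mono mult_right_mono) auto
    finally have "\<bar>\<Sum>j<n. ((- \<Delta> j / 2) * T j x + \<Delta> j / 2) - D x j\<bar> \<le> 3 * \<omega>" by simp
    then show ?thesis unfolding eq using P0[OF x] by (simp add: \<omega>_def) (smt (verit) abs_triangle_ineq)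
  qed
  then show "\<exists>\<Psi>. sampled_tanh_net XX \<Psi> \<and> (\<forall>x\<in>XX. \<bar>\<Psi> x - h (max (c - \<delta>/2) (u \<bullet> x))\<bar> < \<epsilon>)"
    using net unfolding c'_def by blast
qed

end


definition expsum :: "(real \<times> 'a::real_inner) list \<Rightarrow> 'a \<Rightarrow> real" where
  "expsum ps x = sum_list (map (\<lambda>(c,v). c * exp (v \<bullet> x)) ps)"

lemma expsum_Nil [simp]: "expsum [] x = 0" by (simp add: expsum_def)
lemma expsum_Cons [simp]: "expsum ((c,v)#ps) x = c * exp (v \<bullet> x) + expsum ps x"
  by (simp add: expsum_def)
lemma expsum_append [simp]: "expsum (ps @ qs) x = expsum ps x + expsum qs x"
  by (simp add: expsum_def)

definition prodl :: "(real \<times> 'a::real_inner) list \<Rightarrow> (real \<times> 'a) list \<Rightarrow> (real \<times> 'a) list" where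
  "prodl ps qs = concat (map (\<lambda>(c,v). map (\<lambda>(d,w). (c*d, v+w)) qs) ps)"

lemma expsum_map: "expsum (map (\<lambda>(d,w). (c*d, v+w)) qs) x = c * exp (v \<bullet> x) * expsum qs x"
proof (induction qs)
  case Nil then show ?case by simp
next
  case (Cons q qs)
  obtain d w where q: "q = (d, w)" by (cases q)
  show ?case using Cons by (simp add: q inner_add_left exp_add algebra_simps)
qed

lemma expsum_prodl: "expsum (prodl ps qs) x = expsum ps x * expsum qs x"
proof (induction ps)
  case Nil then show ?case by (simp add: prodl_def)
next
  case (Cons p ps)
  obtain c v where p: "p = (c, v)" by (cases p)
  have "prodl (p#ps) qs = map (\<lambda>(d,w). (c*d, v+w)) qs @ prodl ps qs" by (simp add: prodl_def p)
  then have "expsum (prodl (p#ps) qs) x = c * exp (v \<bullet> x) * expsum qs x + expsum ps x * expsum qs x"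
    by (simp only: expsum_append expsum_map Cons.IH)
  then show ?case by (simp add: p algebra_simps)
qed

lemma expsum_cont: "continuous_on S (expsum ps)"
proof (induction ps)
  case Nil then show ?case by (simp add: expsum_def[abs_def])
next
  case (Cons p ps)
  obtain c v where p: "p = (c, v)" by (cases p)
  have "expsum (p#ps) = (\<lambda>x. c * exp (v \<bullet> x) + expsum ps x)" by (simp add: p fun_eq_iff)
  then show ?case using Cons by (simp) (intro continuous_intros)
qed

context nbhd begin

lemma ridge:
  fixes h :: "real \<Rightarrow> real"
  assumes u: "norm u = 1" and h: "continuous_on UNIV h" and e: "\<epsilon> > 0"
  shows "\<exists>\<Psi>. sampled_tanh_net XX \<Psi> \<and> (\<forall>x\<in>XX. \<bar>\<Psi> x - h (u \<bullet> x)\<bar> < \<epsilon>)"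
proof -
  obtain B where B: "\<forall>x\<in>XX. norm x \<le> B" using XX_bound by blast
  have ub: "\<bar>u \<bullet> x\<bar> \<le> B" if "x \<in> XX" for x using abs_inner_unit[OF u, of x] B that by force
  have QB: "Q u B" by (rule Q_top) (use ub in force)
  have "Q u (-B)"
  proof (rule ccontr)
    assume nQ: "\<not> Q u (-B)"
    define S where "S = {c. Q u c}"
    have SB: "B \<in> S" using QB by (simp add: S_def)
    have lb: "-B < c" if "c \<in> S" for c
    proof (rule ccontr)
      assume "\<not> -B < c"
      then have "c \<le> -B" by simp
      then have "Q u (-B)" using Q_mono that by (auto simp: S_def)
      then show False using nQ by simp
    qed
    have bdd: "bdd_below S" by (rule bdd_belowI[of _ "-B"]) (use lb in force)
    define cs where "cs = Inf S"
    have "\<forall>c'>cs. Q u c'"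
    proof (intro allI impI)
      fix c' assume "c' > cs"
      then obtain s where "s \<in> S" "s < c'" using cInf_lessD[of S c'] SB unfolding cs_def by blast
      then show "Q u c'" using Q_mono by (auto simp: S_def)
    qed
    then have Qcs: "Q u cs" by (rule Q_lim[OF u])
    obtain \<delta> where d: "\<delta> > 0" and dd: "(\<forall>e. cs - \<delta> < e \<and> e < cs \<longrightarrow> (\<exists>c0\<in>X'. \<bar>e - u \<bullet> c0\<bar> < eps))
              \<or> (\<forall>x\<in>XX. \<not> (cs - \<delta> < u \<bullet> x \<and> u \<bullet> x < cs))"
      using dichot[OF u, of cs] by blast
    have "Q u (cs - \<delta>/2)" using dd Q_int[OF u Qcs d] Q_gap[OF u Qcs d] by blast
    then have "cs \<le> cs - \<delta>/2" using cInf_lower[OF _ bdd] unfolding cs_def S_def by auto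
    then show False using d by simp
  qed
  from QD[OF this h e] obtain \<Psi> where "sampled_tanh_net XX \<Psi>"
    "\<And>x. x \<in> XX \<Longrightarrow> \<bar>\<Psi> x - h (max (-B) (u \<bullet> x))\<bar> < \<epsilon>" by blast
  moreover have "max (-B) (u \<bullet> x) = u \<bullet> x" if "x \<in> XX" for x using ub[OF that] by simp
  ultimately show ?thesis by auto
qed

definition approx :: "('a \<Rightarrow> real) \<Rightarrow> bool" where
  "approx f \<longleftrightarrow> (\<forall>\<epsilon>>0. \<exists>\<Psi>. sampled_tanh_net XX \<Psi> \<and> (\<forall>x\<in>XX. \<bar>\<Psi> x - f x\<bar> < \<epsilon>))"

lemma approx_add:
  assumes "approx f" "approx g" shows "approx (\<lambda>x. f x + g x)"
  unfolding approx_def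
proof (intro allI impI)
  fix \<epsilon> :: real assume e: "\<epsilon> > 0"
  obtain \<Psi>1 where 1: "sampled_tanh_net XX \<Psi>1" "\<forall>x\<in>XX. \<bar>\<Psi>1 x - f x\<bar> < \<epsilon>/2"
    using assms(1) e unfolding approx_def by (meson half_gt_zero)
  obtain \<Psi>2 where 2: "sampled_tanh_net XX \<Psi>2" "\<forall>x\<in>XX. \<bar>\<Psi>2 x - g x\<bar> < \<epsilon>/2"
    using assms(2) e unfolding approx_def by (meson half_gt_zero)
  have "sampled_tanh_net XX (\<lambda>x. \<Psi>1 x + \<Psi>2 x)" by (rule net_add[OF 1(1) 2(1)])
  moreover have "\<forall>x\<in>XX. \<bar>(\<Psi>1 x + \<Psi>2 x) - (f x + g x)\<bar> < \<epsilon>"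
  proof
    fix x assume x: "x \<in> XX"
    have "(\<Psi>1 x + \<Psi>2 x) - (f x + g x) = (\<Psi>1 x - f x) + (\<Psi>2 x - g x)" by simp
    moreover have "\<bar>\<Psi>1 x - f x\<bar> < \<epsilon>/2" "\<bar>\<Psi>2 x - g x\<bar> < \<epsilon>/2" using 1(2) 2(2) x by auto
    ultimately show "\<bar>(\<Psi>1 x + \<Psi>2 x) - (f x + g x)\<bar> < \<epsilon>"
      using abs_triangle_ineq[of "\<Psi>1 x - f x" "\<Psi>2 x - g x"] by linarith
  qed
  ultimately show "\<exists>\<Psi>. sampled_tanh_net XX \<Psi> \<and> (\<forall>x\<in>XX. \<bar>\<Psi> x - (f x + g x)\<bar> < \<epsilon>)" by blast
qed

lemma approx_scale:
  assumes "approx f" shows "approx (\<lambda>x. a * f x)"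
  unfolding approx_def
proof (intro allI impI)
  fix \<epsilon> :: real assume e: "\<epsilon> > 0"
  have e': "\<epsilon> / (\<bar>a\<bar> + 1) > 0" using e by simp
  obtain \<Psi>1 where 1: "sampled_tanh_net XX \<Psi>1" "\<forall>x\<in>XX. \<bar>\<Psi>1 x - f x\<bar> < \<epsilon> / (\<bar>a\<bar> + 1)"
    using assms(1) e' unfolding approx_def by blast
  have "sampled_tanh_net XX (\<lambda>x. a *\<^sub>R \<Psi>1 x)" by (rule net_scale[OF 1(1)])
  moreover have "\<bar>a * \<Psi>1 x - a * f x\<bar> < \<epsilon>" if x: "x \<in> XX" for x
  proof -
    have "\<bar>a * \<Psi>1 x - a * f x\<bar> = \<bar>a\<bar> * \<bar>\<Psi>1 x - f x\<bar>" by (metis abs_mult right_diff_distrib)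
    also have "\<dots> \<le> \<bar>a\<bar> * (\<epsilon> / (\<bar>a\<bar> + 1))" using 1(2) x by (intro mult_left_mono) (auto simp: less_imp_le)
    also have "\<dots> < (\<bar>a\<bar> + 1) * (\<epsilon> / (\<bar>a\<bar> + 1))" using e' by (intro mult_strict_right_mono) auto
    also have "\<dots> = \<epsilon>" by simp
    finally show ?thesis .
  qed
  ultimately show "\<exists>\<Psi>. sampled_tanh_net XX \<Psi> \<and> (\<forall>x\<in>XX. \<bar>\<Psi> x - a * f x\<bar> < \<epsilon>)" by auto
qed

lemma approx_const: "approx (\<lambda>x. c)"
  unfolding approx_def using net_const[of XX c] by (intro allI impI exI[of _ "\<lambda>x. c"]) auto

lemma approx_exp: "approx (\<lambda>x. exp (v \<bullet> x))"
proof (cases "v = 0")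
  case True
  then show ?thesis using approx_const[of 1] by simp
next
  case False
  define u where "u = v /\<^sub>R norm v"
  have u: "norm u = 1" using False by (simp add: u_def)
  have uv: "norm v * (u \<bullet> x) = v \<bullet> x" for x using False by (simp add: u_def)
  have h: "continuous_on UNIV (\<lambda>t. exp (norm v * t))" by (intro continuous_intros)
  show ?thesis unfolding approx_def
  proof (intro allI impI)
    fix \<epsilon> :: real assume "\<epsilon> > 0"
    from ridge[OF u h this] show "\<exists>\<Psi>. sampled_tanh_net XX \<Psi> \<and> (\<forall>x\<in>XX. \<bar>\<Psi> x - exp (v \<bullet> x)\<bar> < \<epsilon>)"
      unfolding uv .
  qed
qed

lemma approx_expsum: "approx (expsum ps)"
proof (induction ps)
  case Nil then show ?case using approx_const[of 0] by (simp add: expsum_def[abs_def])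
next
  case (Cons p ps)
  obtain c v where p: "p = (c, v)" by (cases p)
  have "expsum (p#ps) = (\<lambda>x. c * exp (v \<bullet> x) + expsum ps x)" by (simp add: p fun_eq_iff)
  then show ?case using approx_add[OF approx_scale[OF approx_exp] Cons] by simp
qed

lemma approx_cont:
  assumes g: "continuous_on XX g" shows "approx g"
proof -
  define R where "R = {f. \<exists>ps::(real \<times> 'a) list. f = expsum ps}"
  interpret fr: function_ring_on R XX
  proof
    show "compact XX" by (rule XX_compact)
  next
    fix f assume "f \<in> R" then show "continuous_on XX f" using expsum_cont by (auto simp: R_def)
  next
    fix f g assume "f \<in> R" "g \<in> R"
    then obtain ps qs where "f = expsum ps" "g = expsum qs" by (auto simp: R_def)
    then have "(\<lambda>x. f x + g x) = expsum (ps @ qs)" by (simp add: fun_eq_iff)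
    then show "(\<lambda>x. f x + g x) \<in> R" by (auto simp: R_def)
  next
    fix f g assume "f \<in> R" "g \<in> R"
    then obtain ps qs where "f = expsum ps" "g = expsum qs" by (auto simp: R_def)
    then have "(\<lambda>x. f x * g x) = expsum (prodl ps qs)" by (simp add: fun_eq_iff expsum_prodl)
    then show "(\<lambda>x. f x * g x) \<in> R" by (auto simp: R_def)
  next
    fix c :: real
    have "(\<lambda>_. c) = expsum [(c, 0)]" by (simp add: fun_eq_iff)
    then show "(\<lambda>_. c) \<in> R" by (auto simp: R_def)
  next
    fix x y assume "x \<in> XX" "y \<in> XX" "x \<noteq> y"
    have "(x - y) \<bullet> x - (x - y) \<bullet> y = (x - y) \<bullet> (x - y)" by (simp add: inner_diff_right)
    also have "\<dots> > 0" using \<open>x \<noteq> y\<close> by simp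
    finally have "exp ((x - y) \<bullet> x) \<noteq> exp ((x - y) \<bullet> y)" by auto
    then have "expsum [(1, x - y)] x \<noteq> expsum [(1, x - y)] y" by simp
    then show "\<exists>f\<in>R. f x \<noteq> f y" unfolding R_def by blast
  qed
  obtain F where F: "F \<in> UNIV \<rightarrow> R" and lim: "uniform_limit XX F g sequentially"
    using fr.Stone_Weierstrass[OF g] by blast
  show ?thesis unfolding approx_def
  proof (intro allI impI)
    fix \<epsilon> :: real assume e: "\<epsilon> > 0"
    then have "\<forall>\<^sub>F n in sequentially. \<forall>x\<in>XX. dist (F n x) (g x) < \<epsilon>/2"
      using lim e unfolding uniform_limit_iff by (meson half_gt_zero)
    then obtain n where n: "\<forall>x\<in>XX. dist (F n x) (g x) < \<epsilon>/2"
      unfolding eventually_sequentially by blast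
    have "F n \<in> R" using F by blast
    then obtain ps where "F n = expsum ps" by (auto simp: R_def)
    then have "approx (F n)" using approx_expsum by simp
    then obtain \<Psi> where \<Psi>: "sampled_tanh_net XX \<Psi>" "\<forall>x\<in>XX. \<bar>\<Psi> x - F n x\<bar> < \<epsilon>/2"
      using e unfolding approx_def by (meson half_gt_zero)
    have "\<forall>x\<in>XX. \<bar>\<Psi> x - g x\<bar> < \<epsilon>"
    proof
      fix x assume x: "x \<in> XX"
      have a: "\<bar>\<Psi> x - F n x\<bar> < \<epsilon>/2" using \<Psi>(2) x by blast
      have b: "\<bar>F n x - g x\<bar> < \<epsilon>/2" using n x by (simp add: dist_real_def)
      show "\<bar>\<Psi> x - g x\<bar> < \<epsilon>" using a b abs_triangle_ineq[of "\<Psi> x - F n x" "F n x - g x"] by simp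
    qed
    then show "\<exists>\<Psi>. sampled_tanh_net XX \<Psi> \<and> (\<forall>x\<in>XX. \<bar>\<Psi> x - g x\<bar> < \<epsilon>)" using \<Psi>(1) by blast
  qed
qed

end


theorem theorem6:
  fixes X' :: "'a::euclidean_space set" and eps_I :: real
    and f :: "'a \<Rightarrow> 'b::euclidean_space" and \<epsilon> :: real
  assumes "compact X'" and "X' \<noteq> {}" and "reach X' > 0"
    and "0 < eps_I" and "ereal eps_I < reach X'" and "eps_I < 1"
    and "continuous_on {x. infdist x X' \<le> eps_I} f"
    and "\<epsilon> > 0"
  shows "\<exists>Psi. sampled_tanh_net {x. infdist x X' \<le> eps_I} Psi \<and>
           (\<forall>x\<in>{x. infdist x X' \<le> eps_I}. norm (f x - Psi x) < \<epsilon>)"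
proof -
  interpret nbhd X' eps_I using assms(1,2,4) by unfold_locales
  have XXeq: "{x. infdist x X' \<le> eps_I} = XX" by (simp add: XX_def)
  have fc: "continuous_on XX f" using assms(7) unfolding XXeq .
  define e where "e = \<epsilon> / real DIM('b)"
  have e: "e > 0" using assms(8) by (simp add: e_def)
  have "\<forall>b\<in>Basis. \<exists>\<Psi>. sampled_tanh_net XX \<Psi> \<and> (\<forall>x\<in>XX. \<bar>\<Psi> x - f x \<bullet> b\<bar> < e)"
  proof
    fix b :: 'b assume "b \<in> Basis"
    have "continuous_on XX (\<lambda>x. f x \<bullet> b)" by (intro continuous_intros fc)
    then have "approx (\<lambda>x. f x \<bullet> b)" by (rule approx_cont)
    then show "\<exists>\<Psi>. sampled_tanh_net XX \<Psi> \<and> (\<forall>x\<in>XX. \<bar>\<Psi> x - f x \<bullet> b\<bar> < e)"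
      using e unfolding approx_def by blast
  qed
  then obtain \<Psi> where \<Psi>: "\<forall>b\<in>Basis. sampled_tanh_net XX (\<Psi> b) \<and> (\<forall>x\<in>XX. \<bar>\<Psi> b x - f x \<bullet> b\<bar> < e)"
    by (rule bchoice[elim_format]) blast
  define \<Phi> where "\<Phi> = (\<lambda>x. \<Sum>b\<in>Basis. \<Psi> b x *\<^sub>R b)"
  have net: "sampled_tanh_net XX \<Phi>"
    unfolding \<Phi>_def by (rule net_sum) (use \<Psi> in \<open>auto intro: net_real_vec\<close>)
  have "norm (f x - \<Phi> x) < \<epsilon>" if x: "x \<in> XX" for x
  proof -
    have eqn: "f x - \<Phi> x = (\<Sum>b\<in>Basis. (f x \<bullet> b - \<Psi> b x) *\<^sub>R b)"
      unfolding \<Phi>_def scaleR_diff_left sum_subtractf euclidean_representation ..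
    have "norm (f x - \<Phi> x) \<le> (\<Sum>b\<in>Basis. norm ((f x \<bullet> b - \<Psi> b x) *\<^sub>R b))"
      unfolding eqn by (rule norm_sum)
    also have "\<dots> = (\<Sum>b\<in>Basis. \<bar>\<Psi> b x - f x \<bullet> b\<bar>)"
      by (rule sum.cong) (auto simp: abs_minus_commute)
    also have "\<dots> < (\<Sum>b\<in>(Basis::'b set). e)"
      by (rule sum_strict_mono) (use \<Psi> x in auto)
    also have "\<dots> = \<epsilon>" by (simp add: e_def)
    finally show ?thesis .
  qed
  then show ?thesis unfolding XXeq using net by blast
qed


end
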